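(* Let $n\ge 1$ and let $\|\cdot\|_L$ be one of the vectorized norms $L_1,L_2,L_\infty$ on $\mathbb{R}^{n\times n}$. Let $M\subset\mathbb{R}^{n\times n}$ be a set containing an open ball $B(a,c)$ whose radius $c$ is large enough that $B(a,c)$ contains a singular matrix of rank $n-1$, and let $S_M$ be the set of singular matrices in $M$. Let $F:\mathbb{R}^{n\times n}\to\mathbb{R}^{n\times n}$ be any polynomial Lipschitz continuous function. Then for every $k>0$ and every $E>0$ there exists a measurable subset $M_\epsilon\subset M\setminus S_M$ of positive finite Lebesgue measure such that $$\mathbb{E}_{x\sim M_\epsilon}\big[\|\mathrm{Inv}(x)-F(x)\|_L^k\big]>E,$$ where the expectation is with respect to the uniform (normalized Lebesgue) distribution on $M_\epsilon$.
   Context: $\mathrm{Inv}(x)=x^{-1}$ denotes matrix inversion, defined on invertible matrices. For $A=(a_{ij})\in\mathbb{R}^{n\times n}$ the norms are vectorized: $\|A\|_{L_1}=\sum_{i,j}|a_{ij}|$, $\|A\|_{L_2}=(\sum_{i,j}|a_{ij}|^2)^{1/2}$, $\|A\|_{L_\infty}=\max_{i,j}|a_{ij}|$; $\mathbb{R}^{n\times n}$ is identified with $\mathbb{R}^{n^2}$ with Lebesgue measure $m$. For a set $S$ of finite positive measure, $\mathbb{E}_{x\sim S}[g(x)]=\frac{1}{m(S)}\int_S g\,dm$. A function $f:\mathbb{R}^{n_1}\to\mathbb{R}^{n_2}$ is called polynomial Lipschitz continuous with respect to norms $\|\cdot\|_{L^+}$, $\|\cdot\|_{L^*}$ (chosen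 among $L_1,L_2,L_\infty$) if there exist a nonnegative integer $N$ and real polynomials $f_0,\dots,f_N$ in two variables such that for all $x,y$, $\|f(x)-f(y)\|_{L^*}\le \sum_{i=0}^{N} f_i(\|x\|_{L^+},\|y\|_{L^+})\|x-y\|_{L^+}^{i}$. *)

theory Defs
  imports "HOL-Analysis.Analysis"
begin

datatype Lnorm = L1 | L2 | Linf

definition vnorm :: "Lnorm \<Rightarrow> real^'n^'m \<Rightarrow> real" where
  "vnorm L A = (case L of
      L1 \<Rightarrow> (\<Sum>i\<in>UNIV. \<Sum>j\<in>UNIV. \<bar>A $ i $ j\<bar>)
    | L2 \<Rightarrow> sqrt (\<Sum>i\<in>UNIV. \<Sum>j\<in>UNIV. (A $ i $ j)^2)
    | Linf \<Rightarrow> (MAX i\<in>UNIV. MAX j\<in>UNIV. \<bar>A $ i $ j\<bar>))"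

definition poly2 :: "(nat \<Rightarrow> nat \<Rightarrow> real) \<Rightarrow> nat \<Rightarrow> real \<Rightarrow> real \<Rightarrow> real" where
  "poly2 c d s t = (\<Sum>i\<le>d. \<Sum>j\<le>d. c i j * s ^ i * t ^ j)"

definition poly_lipschitz :: "Lnorm \<Rightarrow> Lnorm \<Rightarrow> (real^'n^'m \<Rightarrow> real^'p^'q) \<Rightarrow> bool" where
  "poly_lipschitz Lp Ls f \<longleftrightarrow>
     (\<exists>(N::nat) (c::nat \<Rightarrow> nat \<Rightarrow> nat \<Rightarrow> real) (d::nat). \<forall>x y.
        vnorm Ls (f x - f y) \<le>
          (\<Sum>i\<le>N. poly2 (c i) d (vnorm Lp x) (vnorm Lp y) * vnorm Lp (x - y) ^ i))"

end

theory Submission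
  imports Defs "HOL-Computational_Algebra.Polynomial"
begin

lemma vnorm_L2_norm: "vnorm L2 (A::real^'n^'m) = norm A"
proof -
  have "\<And>i. (norm (A $ i))^2 = (\<Sum>j\<in>UNIV. (A $ i $ j)^2)"
    by (simp add: norm_vec_def L2_set_def sum_nonneg)
  then show ?thesis by (simp add: vnorm_def norm_vec_def L2_set_def)
qed

lemma norm_le_S1: "norm (A::real^'n^'m) \<le> vnorm L1 A"
proof -
  have "norm A \<le> (\<Sum>i\<in>UNIV. norm (A $ i))"
    unfolding norm_vec_def by (rule L2_set_le_sum) auto
  also have "\<dots> \<le> (\<Sum>i\<in>UNIV. \<Sum>j\<in>UNIV. \<bar>A $ i $ j\<bar>)"
    by (intro sum_mono norm_le_l1_cart)
  finally show ?thesis by (simp add: vnorm_def)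
qed

lemma linf_ge: "\<bar>(A::real^'n^'m) $ i $ j\<bar> \<le> vnorm Linf A"
proof -
  have "\<bar>A $ i $ j\<bar> \<le> (MAX j\<in>UNIV. \<bar>A $ i $ j\<bar>)" by (rule Max_ge) auto
  also have "\<dots> \<le> (MAX i\<in>UNIV. MAX j\<in>UNIV. \<bar>A $ i $ j\<bar>)" by (rule Max_ge) auto
  finally show ?thesis by (simp add: vnorm_def)
qed

lemma linf_le: "(\<And>i j. \<bar>(A::real^'n^'m) $ i $ j\<bar> \<le> B) \<Longrightarrow> vnorm Linf A \<le> B"
  by (simp add: vnorm_def)

lemma comp_le_S1: "\<bar>(A::real^'n^'m) $ i $ j\<bar> \<le> vnorm L1 A"
proof -
  have "\<bar>A $ i $ j\<bar> \<le> (\<Sum>j\<in>UNIV. \<bar>A $ i $ j\<bar>)" by (rule member_le_sum) auto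
  also have "\<dots> \<le> (\<Sum>i\<in>UNIV. \<Sum>j\<in>UNIV. \<bar>A $ i $ j\<bar>)" by (rule member_le_sum) (auto intro: sum_nonneg)
  finally show ?thesis by (simp add: vnorm_def)
qed

lemma S1_le_bound: "(\<And>i j. \<bar>(A::real^'n^'m) $ i $ j\<bar> \<le> B) \<Longrightarrow> vnorm L1 A \<le> real CARD('m) * real CARD('n) * B"
proof -
  assume h: "\<And>i j. \<bar>A $ i $ j\<bar> \<le> B"
  have "(\<Sum>i\<in>UNIV. \<Sum>j\<in>UNIV. \<bar>A $ i $ j\<bar>) \<le> (\<Sum>i\<in>(UNIV::'m set). \<Sum>j\<in>(UNIV::'n set). B)"
    by (intro sum_mono h)
  then show ?thesis by (simp add: vnorm_def)
qed

lemma vnorm_nonneg: "0 \<le> vnorm L (A::real^'n^'m)"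
proof (cases L)
  case Linf
  then show ?thesis using linf_ge[of A] order_trans abs_ge_zero by blast
qed (auto simp: vnorm_def intro!: sum_nonneg)

lemma vnorm_le_S1: "vnorm L (A::real^'n^'m) \<le> vnorm L1 A"
proof (cases L)
  case L2
  then show ?thesis using norm_le_S1[of A] vnorm_L2_norm[of A] by simp
next
  case Linf
  then show ?thesis using linf_le[of A "vnorm L1 A"] comp_le_S1[of A] by simp
qed simp

lemma S1_le_norm: "vnorm L1 (A::real^'n^'m) \<le> real CARD('m) * real CARD('n) * norm A"
proof (rule S1_le_bound)
  fix i j
  have "\<bar>A $ i $ j\<bar> \<le> norm (A $ i)" by (rule component_le_norm_cart)
  also have "\<dots> \<le> norm A" unfolding norm_vec_def[of A] by (rule member_le_L2_set) auto
  finally show "\<bar>A $ i $ j\<bar> \<le> norm A" .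
qed

lemma S1_le_K: "vnorm L1 (A::real^'n^'m) \<le> real CARD('m) * real CARD('n) * vnorm L A"
proof (cases L)
  case L1
  have "1 \<le> real CARD('m) * real CARD('n)"
    by (metis One_nat_def Suc_leI of_nat_1 of_nat_le_iff of_nat_mult nat_0_less_mult_iff zero_less_card_finite finite_UNIV)
  then have "1 * vnorm L1 A \<le> real CARD('m) * real CARD('n) * vnorm L1 A"
    by (intro mult_right_mono vnorm_nonneg)
  then show ?thesis using L1 by simp
next
  case L2
  then show ?thesis using S1_le_norm[of A] vnorm_L2_norm[of A] by simp
next
  case Linf
  then show ?thesis using S1_le_bound[of A "vnorm Linf A"] linf_ge[of A] by simp
qed

lemma vnorm_triangle: "vnorm L ((A::real^'n^'m) + B) \<le> vnorm L A + vnorm L B"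
proof (cases L)
  case L1
  have "(\<Sum>i\<in>UNIV. \<Sum>j\<in>UNIV. \<bar>(A + B) $ i $ j\<bar>) \<le> (\<Sum>i\<in>UNIV. \<Sum>j\<in>UNIV. \<bar>A $ i $ j\<bar> + \<bar>B $ i $ j\<bar>)"
    by (intro sum_mono) (simp add: abs_triangle_ineq)
  then show ?thesis using L1 by (simp add: vnorm_def sum.distrib)
next
  case L2
  then show ?thesis by (simp add: vnorm_L2_norm norm_triangle_ineq)
next
  case Linf
  have "\<And>i j. \<bar>(A + B) $ i $ j\<bar> \<le> vnorm Linf A + vnorm Linf B"
  proof -
    fix i j
    show "\<bar>(A + B) $ i $ j\<bar> \<le> vnorm Linf A + vnorm Linf B"
      using linf_ge[of A i j] linf_ge[of B i j] abs_triangle_ineq[of "A$i$j" "B$i$j"] by simp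
  qed
  then show ?thesis using Linf linf_le by blast
qed

lemma S1_scale: "vnorm L1 (t *\<^sub>R (A::real^'n^'m)) = \<bar>t\<bar> * vnorm L1 A"
  by (simp add: vnorm_def abs_mult sum_distrib_left)

lemma norm_mv: "norm ((A::real^'n^'m) *v x) \<le> vnorm L1 A * norm x"
proof -
  have "norm (A *v x) \<le> onorm ((*v) A) * norm x"
    by (rule onorm[OF matrix_vector_mul_bounded_linear])
  also have "\<dots> \<le> vnorm L1 A * norm x"
    using onorm_le_matrix_component_sum[of A] by (simp add: vnorm_def mult_right_mono)
  finally show ?thesis .
qed

lemma poly2_bound:
  assumes "\<bar>s\<bar> \<le> B" "\<bar>t\<bar> \<le> B"
  shows "\<bar>poly2 c d s t\<bar> \<le> poly2 (\<lambda>i j. \<bar>c i j\<bar>) d B B"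
proof -
  have "\<bar>poly2 c d s t\<bar> \<le> (\<Sum>i\<le>d. \<bar>\<Sum>j\<le>d. c i j * s ^ i * t ^ j\<bar>)"
    unfolding poly2_def by (rule sum_abs)
  also have "\<dots> \<le> (\<Sum>i\<le>d. \<Sum>j\<le>d. \<bar>c i j * s ^ i * t ^ j\<bar>)"
    by (intro sum_mono sum_abs)
  also have "\<dots> \<le> (\<Sum>i\<le>d. \<Sum>j\<le>d. \<bar>c i j\<bar> * B ^ i * B ^ j)"
  proof (intro sum_mono)
    fix i j
    have "\<bar>s\<bar> ^ i \<le> B ^ i" by (intro power_mono assms) simp
    moreover have "\<bar>t\<bar> ^ j \<le> B ^ j" by (intro power_mono assms) simp
    moreover have "0 \<le> B" using assms(1) by linarith
    ultimately show "\<bar>c i j * s ^ i * t ^ j\<bar> \<le> \<bar>c i j\<bar> * B ^ i * B ^ j"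
      by (simp add: abs_mult power_abs mult.assoc mult_mono mult_left_mono)
  qed
  finally show ?thesis by (simp add: poly2_def)
qed


lemma det_line_poly:
  fixes x0 D :: "real^'n^'n"
  shows "\<exists>P. \<forall>t. det (x0 + t *\<^sub>R D) = poly P t"
proof -
  define P where "P = (\<Sum>p\<in>{p. p permutes (UNIV::'n set)}.
      smult (of_int (sign p)) (\<Prod>i\<in>UNIV. [:x0 $ i $ p i, D $ i $ p i:]))"
  have "det (x0 + t *\<^sub>R D) = poly P t" for t
    unfolding P_def det_def by (simp add: poly_sum poly_prod mult.commute)
  then show ?thesis by blast
qed

lemma exists_invertible_near:
  fixes x0 :: "real^'n^'n"
  assumes "e > 0"
  shows "\<exists>y. det y \<noteq> 0 \<and> vnorm L1 (y - x0) < e"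
proof -
  define D where "D = mat 1 - x0"
  obtain P where P: "\<And>t. det (x0 + t *\<^sub>R D) = poly P t" using det_line_poly by blast
  have "poly P 1 = 1" using P[of 1] by (simp add: D_def)
  then have "P \<noteq> 0" by auto
  then have fin: "finite {t. poly P t = 0}" by (rule poly_roots_finite)
  define t0 where "t0 = e / (vnorm L1 D + 1)"
  have S1D: "0 \<le> vnorm L1 D" by (rule vnorm_nonneg)
  have t0: "0 < t0" using assms S1D by (simp add: t0_def)
  have "infinite ({0<..<t0} - {t. poly P t = 0})"
    using infinite_Ioo[OF t0] fin by (rule Diff_infinite_finite[rotated])
  then obtain t where t: "t \<in> {0<..<t0}" "poly P t \<noteq> 0"
    by (metis (mono_tags, lifting) DiffE finite.emptyI mem_Collect_eq subsetI finite_subset)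
  have "vnorm L1 ((x0 + t *\<^sub>R D) - x0) = t * vnorm L1 D"
    using t by (simp add: S1_scale)
  also have "\<dots> \<le> t * (vnorm L1 D + 1)" using t by simp
  also have "\<dots> < t0 * (vnorm L1 D + 1)" using t S1D by (intro mult_strict_right_mono) auto
  also have "\<dots> = e" using S1D by (simp add: t0_def)
  finally have "vnorm L1 ((x0 + t *\<^sub>R D) - x0) < e" .
  moreover have "det (x0 + t *\<^sub>R D) \<noteq> 0" using t P[of t] by simp
  ultimately show ?thesis by blast
qed

lemma inv_lower:
  fixes x0 y :: "real^'n^'n"
  assumes v: "v \<noteq> 0" "x0 *v v = 0" and dy: "det y \<noteq> 0"
  shows "1 \<le> vnorm L1 (matrix_inv y) * vnorm L1 (y - x0)"
proof -
  have "invertible y" using dy by (simp add: invertible_det_nz)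
  then have "\<exists>A'. y ** A' = mat 1 \<and> A' ** y = mat 1" by (simp add: invertible_def)
  then have "y ** matrix_inv y = mat 1 \<and> matrix_inv y ** y = mat 1"
    unfolding matrix_inv_def by (rule someI_ex)
  then have inv: "matrix_inv y ** y = mat 1" by blast
  have "v = matrix_inv y *v (y *v v)"
    by (simp add: matrix_vector_mul_assoc inv)
  also have "y *v v = (y - x0) *v v" using v by (simp add: matrix_vector_mult_diff_rdistrib)
  finally have "norm v = norm (matrix_inv y *v ((y - x0) *v v))" by simp
  also have "\<dots> \<le> vnorm L1 (matrix_inv y) * norm ((y - x0) *v v)" by (rule norm_mv)
  also have "\<dots> \<le> vnorm L1 (matrix_inv y) * (vnorm L1 (y - x0) * norm v)"
    by (intro mult_left_mono norm_mv vnorm_nonneg)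
  finally have "1 * norm v \<le> (vnorm L1 (matrix_inv y) * vnorm L1 (y - x0)) * norm v"
    by (simp add: mult.assoc)
  then show ?thesis using v by (simp only: mult_le_cancel_right) auto
qed


lemma F_bounded:
  fixes F :: "real^'n^'n \<Rightarrow> real^'n^'n" and x0 :: "real^'n^'n"
  assumes F_pl: "poly_lipschitz Lp Ls F"
  shows "\<exists>BF. \<forall>y. vnorm L1 (y - x0) \<le> 1 \<longrightarrow> vnorm L1 (F y) \<le> BF"
proof -
  obtain N cc d where H: "\<And>x y. vnorm Ls (F x - F y) \<le>
          (\<Sum>i\<le>N. poly2 (cc i) d (vnorm Lp x) (vnorm Lp y) * vnorm Lp (x - y) ^ i)"
    using F_pl unfolding poly_lipschitz_def by blast
  define B where "B = vnorm Lp x0 + 1"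
  define G where "G = (\<Sum>i\<le>N. poly2 (\<lambda>a b. \<bar>cc i a b\<bar>) d B B)"
  define K where "K = real CARD('n) * real CARD('n)"
  have "vnorm L1 (F y) \<le> K * (vnorm Ls (F x0) + G)" if y: "vnorm L1 (y - x0) \<le> 1" for y
  proof -
    have e1: "vnorm Lp (y - x0) \<le> 1" using vnorm_le_S1[of Lp "y - x0"] y by linarith
    have e0: "0 \<le> vnorm Lp (y - x0)" by (rule vnorm_nonneg)
    have "vnorm Lp y \<le> vnorm Lp x0 + vnorm Lp (y - x0)"
      using vnorm_triangle[of Lp x0 "y - x0"] by simp
    then have hby: "\<bar>vnorm Lp y\<bar> \<le> B" using e1 vnorm_nonneg[of Lp y] by (simp add: B_def)
    have bx: "\<bar>vnorm Lp x0\<bar> \<le> B" using vnorm_nonneg[of Lp x0] by (simp add: B_def)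
    have "vnorm Ls (F y - F x0) \<le> (\<Sum>i\<le>N. poly2 (cc i) d (vnorm Lp y) (vnorm Lp x0) * vnorm Lp (y - x0) ^ i)"
      by (rule H)
    also have "\<dots> \<le> G" unfolding G_def
    proof (rule sum_mono)
      fix i
      have p: "\<bar>poly2 (cc i) d (vnorm Lp y) (vnorm Lp x0)\<bar> \<le> poly2 (\<lambda>a b. \<bar>cc i a b\<bar>) d B B"
        by (rule poly2_bound[OF hby bx])
      have q: "vnorm Lp (y - x0) ^ i \<le> 1" "0 \<le> vnorm Lp (y - x0) ^ i"
        using e0 e1 by (auto intro: power_le_one)
      have "poly2 (cc i) d (vnorm Lp y) (vnorm Lp x0) * vnorm Lp (y - x0) ^ i
           \<le> \<bar>poly2 (cc i) d (vnorm Lp y) (vnorm Lp x0)\<bar> * vnorm Lp (y - x0) ^ i"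
        using q by (intro mult_right_mono) auto
      also have "\<dots> \<le> \<bar>poly2 (cc i) d (vnorm Lp y) (vnorm Lp x0)\<bar> * 1"
        using q by (intro mult_left_mono) auto
      finally show "poly2 (cc i) d (vnorm Lp y) (vnorm Lp x0) * vnorm Lp (y - x0) ^ i
           \<le> poly2 (\<lambda>a b. \<bar>cc i a b\<bar>) d B B" using p by simp
    qed
    finally have g: "vnorm Ls (F y - F x0) \<le> G" .
    have "vnorm Ls (F y) \<le> vnorm Ls (F x0) + vnorm Ls (F y - F x0)"
      using vnorm_triangle[of Ls "F x0" "F y - F x0"] by simp
    then have "vnorm Ls (F y) \<le> vnorm Ls (F x0) + G" using g by simp
    moreover have "0 \<le> K" by (simp add: K_def)
    ultimately have "K * vnorm Ls (F y) \<le> K * (vnorm Ls (F x0) + G)"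
      by (intro mult_left_mono)
    moreover have "vnorm L1 (F y) \<le> K * vnorm Ls (F y)"
      unfolding K_def by (rule S1_le_K)
    ultimately show ?thesis by linarith
  qed
  then show ?thesis by blast
qed

theorem theorem3p8:
  fixes L Lp Ls :: Lnorm
    and M :: "(real^'n^'n) set"
    and a :: "real^'n^'n"
    and c :: real
    and F :: "real^'n^'n \<Rightarrow> real^'n^'n"
  assumes ball_sub: "{x. vnorm L (x - a) < c} \<subseteq> M"
    and ball_rank: "\<exists>x. vnorm L (x - a) < c \<and> rank x = CARD('n) - 1"
    and F_pl: "poly_lipschitz Lp Ls F"
  shows "\<forall>k::real. k > 0 \<longrightarrow> (\<forall>E::real. E > 0 \<longrightarrow>
    (\<exists>Me. Me \<subseteq> M - {x\<in>M. det x = 0} \<and> Me \<in> sets lebesgue \<and>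
          0 < emeasure lebesgue Me \<and> emeasure lebesgue Me < \<infinity> \<and>
          (\<integral>\<^sup>+x\<in>Me. ennreal (vnorm L (matrix_inv x - F x) powr k) \<partial>lebesgue)
             / emeasure lebesgue Me > ennreal E))"
proof (intro allI impI)
  fix k E :: real
  assume k: "k > 0" and E: "E > 0"
  obtain x0 where x0: "vnorm L (x0 - a) < c" "rank x0 = CARD('n) - 1" using ball_rank by blast
  have c0: "0 < CARD('n)" by (rule finite_UNIV_card_ge_0) simp
  have "rank x0 \<noteq> CARD('n)" using x0(2) c0 by arith
  then obtain v where v: "v \<noteq> 0" "x0 *v v = 0"
    using matrix_nonfull_linear_equations_eq by blast
  obtain BF where BF: "\<And>y. vnorm L1 (y - x0) \<le> 1 \<Longrightarrow> vnorm L1 (F y) \<le> BF"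
    using F_bounded[OF F_pl, of x0] by blast
  define K where "K = real CARD('n) * real CARD('n)"
  have K1: "1 \<le> K" unfolding K_def
    by (metis One_nat_def Suc_leI of_nat_1 of_nat_le_iff of_nat_mult nat_0_less_mult_iff zero_less_card_finite finite_UNIV)
  define R where "R = (E + 1) powr (1 / k)"
  have R: "0 < R" using E by (simp add: R_def)
  have Rk: "R powr k = E + 1" using E k by (simp add: R_def powr_powr)
  define \<rho> where "\<rho> = c - vnorm L (x0 - a)"
  have \<rho>: "0 < \<rho>" using x0 by (simp add: \<rho>_def)
  define Q where "Q = K * R + \<bar>BF\<bar> + 1"
  have Q: "0 < Q" using K1 R by (simp add: Q_def add_pos_nonneg)
  define \<delta> where "\<delta> = min (min 1 \<rho>) (1 / Q)"
  have \<delta>: "0 < \<delta>" using \<rho> Q by (simp add: \<delta>_def)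
  have "\<delta> \<le> 1 / Q" by (simp add: \<delta>_def)
  then have "\<delta> * Q \<le> (1 / Q) * Q" using Q by (intro mult_right_mono) auto
  then have \<delta>Q: "\<delta> * Q \<le> 1" using Q by simp
  have key: "R \<le> vnorm L (matrix_inv y - F y)" if dy: "det y \<noteq> 0" and yd: "vnorm L1 (y - x0) < \<delta>" for y
  proof -
    let ?s = "vnorm L1 (y - x0)" and ?i = "vnorm L1 (matrix_inv y)"
    have one: "1 \<le> ?i * ?s" by (rule inv_lower[OF v dy])
    have s0: "0 \<le> ?s" by (rule vnorm_nonneg)
    have "Q * ?s \<le> Q * \<delta>" using yd Q by simp
    also have "\<dots> \<le> 1" using \<delta>Q by (simp add: mult.commute)
    also have "\<dots> \<le> ?i * ?s" by (rule one)
    finally have "Q * ?s \<le> ?i * ?s" .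
    moreover have "?s > 0" using one s0 by (cases "?s = 0") auto
    ultimately have iQ: "Q \<le> ?i" by simp
    have fy: "vnorm L1 (F y) \<le> BF" using BF[of y] yd by (simp add: \<delta>_def)
    have "?i \<le> vnorm L1 (matrix_inv y - F y) + vnorm L1 (F y)"
      using vnorm_triangle[of L1 "matrix_inv y - F y" "F y"] by simp
    then have "K * R + 1 \<le> vnorm L1 (matrix_inv y - F y)" using iQ fy by (simp add: Q_def)
    also have "\<dots> \<le> K * vnorm L (matrix_inv y - F y)" unfolding K_def by (rule S1_le_K)
    finally have "K * R \<le> K * vnorm L (matrix_inv y - F y)" by simp
    then show ?thesis using K1 by simp
  qed
  have inM: "y \<in> M" if "vnorm L1 (y - x0) < \<delta>" for y
  proof -
    have "vnorm L (y - a) \<le> vnorm L (x0 - a) + vnorm L (y - x0)"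
      using vnorm_triangle[of L "x0 - a" "y - x0"] by simp
    also have "\<dots> \<le> vnorm L (x0 - a) + vnorm L1 (y - x0)" using vnorm_le_S1 by simp
    also have "\<dots> < c" using that by (simp add: \<delta>_def \<rho>_def)
    finally show ?thesis using ball_sub by blast
  qed
  obtain y1 where y1: "det y1 \<noteq> 0" "vnorm L1 (y1 - x0) < \<delta> / 2"
    using exists_invertible_near[of "\<delta> / 2" x0] \<delta> by auto
  have cdet: "continuous_on UNIV (det :: real^'n^'n \<Rightarrow> real)"
    unfolding det_def
    by (intro continuous_on_sum continuous_on_mult continuous_on_const continuous_on_prod
      continuous_on_component continuous_on_id)
  have op: "open {z::real^'n^'n. det z \<noteq> 0}"
    by (rule open_Collect_neq[OF cdet]) (rule continuous_on_const)
  have "y1 \<in> {z. det z \<noteq> 0}" using y1(1) by simp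
  then have "\<exists>e>0. ball y1 e \<subseteq> {z. det z \<noteq> 0}" using open_contains_ball_eq[OF op] by blast
  then obtain r1 where r1: "r1 > 0" "ball y1 r1 \<subseteq> {z. det z \<noteq> 0}" by blast
  define r where "r = min r1 (\<delta> / (2 * K))"
  have r: "0 < r" using r1 \<delta> K1 by (simp add: r_def)
  define Me where "Me = ball y1 r"
  have Me_good: "det z \<noteq> 0 \<and> vnorm L1 (z - x0) < \<delta>" if "z \<in> Me" for z
  proof -
    have d: "dist y1 z < r" using that by (simp add: Me_def)
    then have dz: "det z \<noteq> 0" using r1 by (auto simp: r_def)
    have t1: "vnorm L1 (z - x0) \<le> vnorm L1 (z - y1) + vnorm L1 (y1 - x0)"
      using vnorm_triangle[of L1 "z - y1" "y1 - x0"] by simp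
    have t2: "vnorm L1 (z - y1) \<le> K * norm (z - y1)" unfolding K_def by (rule S1_le_norm)
    have "norm (z - y1) < r" using d by (simp add: dist_norm norm_minus_commute)
    then have "norm (z - y1) < \<delta> / (2 * K)" by (simp add: r_def)
    then have "K * norm (z - y1) < K * (\<delta> / (2 * K))" using K1 by (intro mult_strict_left_mono) auto
    also have "K * (\<delta> / (2 * K)) = \<delta> / 2" using K1 by simp
    finally have t3: "K * norm (z - y1) < \<delta> / 2" .
    have "vnorm L1 (z - x0) < \<delta>" using t1 t2 t3 y1(2) by linarith
    then show ?thesis using dz by blast
  qed
  have sub: "Me \<subseteq> M - {x\<in>M. det x = 0}" using Me_good inM by blast
  have meas: "Me \<in> sets lebesgue" using lmeasurable_ball by (simp add: Me_def fmeasurable_def)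
  have meq: "emeasure lebesgue Me = emeasure lborel Me"
    by (simp add: emeasure_completion Me_def)
  have pos: "0 < emeasure lebesgue Me" using r
    by (simp add: meq Me_def emeasure_ball ennreal_less_zero_iff)
  have fin: "emeasure lebesgue Me < \<infinity>" using emeasure_lborel_ball_finite[of y1 r] by (simp add: meq Me_def)
  have "(\<integral>\<^sup>+x\<in>Me. ennreal (R powr k) \<partial>lebesgue)
        \<le> (\<integral>\<^sup>+x\<in>Me. ennreal (vnorm L (matrix_inv x - F x) powr k) \<partial>lebesgue)"
  proof (rule nn_integral_mono)
    fix x
    show "ennreal (R powr k) * indicator Me x
          \<le> ennreal (vnorm L (matrix_inv x - F x) powr k) * indicator Me x"
    proof (cases "x \<in> Me")
      case True
      then have "R \<le> vnorm L (matrix_inv x - F x)" using key Me_good by blast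
      then have "R powr k \<le> vnorm L (matrix_inv x - F x) powr k"
        using R k by (intro powr_mono2) auto
      then show ?thesis using True by (simp add: ennreal_leI)
    qed simp
  qed
  then have I: "ennreal (E + 1) * emeasure lebesgue Me
        \<le> (\<integral>\<^sup>+x\<in>Me. ennreal (vnorm L (matrix_inv x - F x) powr k) \<partial>lebesgue)"
    using nn_integral_cmult_indicator[OF meas, of "ennreal (R powr k)"] Rk by simp
  have "ennreal E < ennreal (E + 1)" using E by (simp add: ennreal_lessI)
  also have "ennreal (E + 1) = (ennreal (E + 1) * emeasure lebesgue Me) / emeasure lebesgue Me"
    using pos fin by (simp add: ennreal_mult_divide_eq)
  also have "\<dots> \<le> (\<integral>\<^sup>+x\<in>Me. ennreal (vnorm L (matrix_inv x - F x) powr k) \<partial>lebesgue) / emeasure lebesgue Me"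
    by (rule divide_right_mono_ennreal[OF I])
  finally show "\<exists>Me. Me \<subseteq> M - {x\<in>M. det x = 0} \<and> Me \<in> sets lebesgue \<and>
          0 < emeasure lebesgue Me \<and> emeasure lebesgue Me < \<infinity> \<and>
          (\<integral>\<^sup>+x\<in>Me. ennreal (vnorm L (matrix_inv x - F x) powr k) \<partial>lebesgue)
             / emeasure lebesgue Me > ennreal E"
    using sub meas pos fin by blast
qed

end
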